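(* Let $(\Omega,+)$ be a group and let $a,b$ be central subgroups of $\Omega$ (i.e. contained in the center). Then: (1) the ternary laws $(xyz)\mapsto\Gamma(x,a,y,b,z)$, $\check\Gamma(x,a,y,b,z)$ and $\Gamma(z,b,y,a,x)$ on $\mathcal{P}$ all coincide, and the ternary laws $\Sigma(b,x,y,z)$, $\check\Sigma(b,x,y,z)$, $\check\Sigma(b,z,y,x)$ and $\Sigma(b,z,y,x)$ on $\mathcal{P}$ all coincide; that is, $\mathcal{P}_{ab}=\check{\mathcal{P}}_{ab}=\mathcal{P}_{ba}^{opp}$ and $\mathcal{P}_b=\check{\mathcal{P}}_b=\check{\mathcal{P}}_b^{opp}=\mathcal{P}_b^{opp}$; (2) the set $\mathit{Gras}(\Omega)$ of all subgroups of $\Omega$ is stable under each of the four ternary laws $(x,y,z)\mapsto \Gamma(x,a,y,b,z)$, $\check\Gamma(x,a,y,b,z)$, $\Sigma(b,x,y,z)$, $\check\Sigma(b,x,y,z)$.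
   Context: $(\Omega,+)$ is a group written additively but not necessarily abelian; $\mathcal{P}$ is its power set. For $x,a,y,b,z\in\mathcal{P}$: $\Gamma(x,a,y,b,z)=\{\omega:\exists\alpha\in a,\beta\in b:\ \alpha+\omega+\beta\in y,\ \alpha+\omega\in z,\ \omega+\beta\in x\}$; $\check\Gamma(x,a,y,b,z)=\{\omega:\exists\alpha\in a,\beta\in b:\ \beta+\omega+\alpha\in y,\ \omega+\alpha\in z,\ \beta+\omega\in x\}$; $\Sigma(b,x,y,z)=\{\omega:\exists\beta,\beta'\in b:\ \omega+\beta\in x,\ \omega+\beta'+\beta\in y,\ \omega+\beta'\in z\}$; $\check\Sigma(b,x,y,z)=\{\omega:\exists\beta,\beta'\in b:\ \beta+\omega\in x,\ \beta+\beta'+\omega\in y,\ \beta'+\omega\in z\}$. $\mathcal{P}_{ab},\check{\mathcal P}_{ab},\mathcal P_b,\check{\mathcal P}_b$ denote $\mathcal P$ with the laws $\Gamma(x,a,y,b,z)$, $\check\Gamma(x,a,y,b,z)$, $\Sigma(b,x,y,z)$, $\check\Sigma(b,x,y,z)$ respectively; for a ternary law $(xyz)$, the opposite law is $(x,y,z)\mapsto(zyx)$, denoted by the superscript $opp$. *)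

theory Defs
  imports Main
begin

text \<open>The group (Omega,+) is the type 'a of class group_add (additive, not necessarily
abelian); its power set P is 'a set.\<close>

definition Gamma :: "'a::group_add set \<Rightarrow> 'a set \<Rightarrow> 'a set \<Rightarrow> 'a set \<Rightarrow> 'a set \<Rightarrow> 'a set" where
  "Gamma x a y b z = {\<omega>. \<exists>\<alpha>\<in>a. \<exists>\<beta>\<in>b. \<alpha> + \<omega> + \<beta> \<in> y \<and> \<alpha> + \<omega> \<in> z \<and> \<omega> + \<beta> \<in> x}"

definition Gamma_check :: "'a::group_add set \<Rightarrow> 'a set \<Rightarrow> 'a set \<Rightarrow> 'a set \<Rightarrow> 'a set \<Rightarrow> 'a set" where
  "Gamma_check x a y b z = {\<omega>. \<exists>\<alpha>\<in>a. \<exists>\<beta>\<in>b. \<beta> + \<omega> + \<alpha> \<in> y \<and> \<omega> + \<alpha> \<in> z \<and> \<beta> + \<omega> \<in> x}"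

definition Sigma_law :: "'a::group_add set \<Rightarrow> 'a set \<Rightarrow> 'a set \<Rightarrow> 'a set \<Rightarrow> 'a set" where
  "Sigma_law b x y z = {\<omega>. \<exists>\<beta>\<in>b. \<exists>\<beta>'\<in>b. \<omega> + \<beta> \<in> x \<and> \<omega> + \<beta>' + \<beta> \<in> y \<and> \<omega> + \<beta>' \<in> z}"

definition Sigma_check :: "'a::group_add set \<Rightarrow> 'a set \<Rightarrow> 'a set \<Rightarrow> 'a set \<Rightarrow> 'a set" where
  "Sigma_check b x y z = {\<omega>. \<exists>\<beta>\<in>b. \<exists>\<beta>'\<in>b. \<beta> + \<omega> \<in> x \<and> \<beta> + \<beta>' + \<omega> \<in> y \<and> \<beta>' + \<omega> \<in> z}"

definition is_subgroup :: "'a::group_add set \<Rightarrow> bool" where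
  "is_subgroup H \<longleftrightarrow> 0 \<in> H \<and> (\<forall>u\<in>H. \<forall>v\<in>H. u + v \<in> H) \<and> (\<forall>u\<in>H. - u \<in> H)"

definition Gras :: "'a::group_add set set" where
  "Gras = {H. is_subgroup H}"

definition central :: "'a::group_add set \<Rightarrow> bool" where
  "central H \<longleftrightarrow> (\<forall>h\<in>H. \<forall>g. h + g = g + h)"

end

theory Submission
  imports Defs
begin

definition cen :: "'a::group_add \<Rightarrow> bool" where "cen g \<longleftrightarrow> (\<forall>h. g + h = h + g)"

lemma cenI: "central A \<Longrightarrow> g \<in> A \<Longrightarrow> cen g" by (auto simp: central_def cen_def)
lemma cenD: "cen g \<Longrightarrow> g + h = h + g" by (simp add: cen_def)
lemma cen_add: "cen g \<Longrightarrow> cen h \<Longrightarrow> cen (g + h)"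
  unfolding cen_def by (metis add.assoc)
lemma cen_swap: "cen c1 \<Longrightarrow> cen c2 \<Longrightarrow> (u1 + c1) + (u2 + c2) = (u1 + u2) + (c1 + c2)"
proof -
  assume "cen c1"
  have "(u1 + c1) + (u2 + c2) = u1 + ((c1 + u2) + c2)" by (simp add: add.assoc)
  also have "c1 + u2 = u2 + c1" using \<open>cen c1\<close> by (rule cenD)
  finally show ?thesis by (simp add: add.assoc)
qed
lemma cen_minus: assumes "cen g" shows "- g + h = h + - g"
proof -
  have "- g + h = - g + (h + g) + - g" by (metis add.assoc add.right_neutral right_minus)
  also have "h + g = g + h" using cenD[OF assms, of h] by simp
  finally show ?thesis by (simp add: add.assoc)
qed
lemma cen_neg: "cen c \<Longrightarrow> - (u + c) = - u + - c"
  unfolding minus_add by (rule cen_minus)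
lemma cen_comm2: "cen c1 \<Longrightarrow> cen c2 \<Longrightarrow> c1 + c2 = c2 + c1" by (simp add: cenD)

lemma subD: assumes "is_subgroup H" shows "0 \<in> H" "u \<in> H \<Longrightarrow> v \<in> H \<Longrightarrow> u + v \<in> H" "u \<in> H \<Longrightarrow> - u \<in> H"
  using assms by (auto simp: is_subgroup_def)

lemma cen_mem: "central A \<Longrightarrow> g \<in> A \<Longrightarrow> g + h = h + g" by (auto simp: central_def)

lemma Gamma_alt:
  assumes "central a" "central b"
  shows "Gamma x a y b z = {\<omega>. \<exists>\<alpha>\<in>a. \<exists>\<beta>\<in>b. \<omega> + (\<alpha> + \<beta>) \<in> y \<and> \<omega> + \<alpha> \<in> z \<and> \<omega> + \<beta> \<in> x}"
proof -
  have e: "\<alpha> + \<omega> = \<omega> + \<alpha>" "\<alpha> + \<omega> + \<beta> = \<omega> + (\<alpha> + \<beta>)" if "\<alpha> \<in> a" "\<beta> \<in> b" for \<alpha> \<beta> \<omega>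
  proof -
    show "\<alpha> + \<omega> = \<omega> + \<alpha>" using cen_mem[OF assms(1) that(1)] .
    then show "\<alpha> + \<omega> + \<beta> = \<omega> + (\<alpha> + \<beta>)" by (simp add: add.assoc)
  qed
  show ?thesis unfolding Gamma_def
  proof (intro set_eqI iffI; elim CollectE bexE conjE; intro CollectI)
    fix \<omega> \<alpha> \<beta> assume h: "\<alpha> \<in> a" "\<beta> \<in> b" "\<alpha> + \<omega> + \<beta> \<in> y" "\<alpha> + \<omega> \<in> z" "\<omega> + \<beta> \<in> x"
    show "\<exists>\<alpha>\<in>a. \<exists>\<beta>\<in>b. \<omega> + (\<alpha> + \<beta>) \<in> y \<and> \<omega> + \<alpha> \<in> z \<and> \<omega> + \<beta> \<in> x"
      using h e[OF h(1,2), of \<omega>] by auto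
  next
    fix \<omega> \<alpha> \<beta> assume h: "\<alpha> \<in> a" "\<beta> \<in> b" "\<omega> + (\<alpha> + \<beta>) \<in> y" "\<omega> + \<alpha> \<in> z" "\<omega> + \<beta> \<in> x"
    have "\<alpha> + \<omega> + \<beta> \<in> y" using h(3) by (simp only: e(2)[OF h(1,2)])
    moreover have "\<alpha> + \<omega> \<in> z" using h(4) by (simp only: e(1)[OF h(1,2)])
    ultimately show "\<exists>\<alpha>\<in>a. \<exists>\<beta>\<in>b. \<alpha> + \<omega> + \<beta> \<in> y \<and> \<alpha> + \<omega> \<in> z \<and> \<omega> + \<beta> \<in> x"
      using h by blast
  qed
qed

lemma Gamma_check_alt:
  assumes "central a" "central b"
  shows "Gamma_check x a y b z = {\<omega>. \<exists>\<alpha>\<in>a. \<exists>\<beta>\<in>b. \<omega> + (\<alpha> + \<beta>) \<in> y \<and> \<omega> + \<alpha> \<in> z \<and> \<omega> + \<beta> \<in> x}"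
proof -
  have e: "\<beta> + \<omega> = \<omega> + \<beta>" "\<beta> + \<omega> + \<alpha> = \<omega> + (\<alpha> + \<beta>)" if "\<alpha> \<in> a" "\<beta> \<in> b" for \<alpha> \<beta> \<omega>
  proof -
    show "\<beta> + \<omega> = \<omega> + \<beta>" using cen_mem[OF assms(2) that(2)] .
    moreover have "\<beta> + \<alpha> = \<alpha> + \<beta>" using cen_mem[OF assms(2) that(2)] .
    ultimately show "\<beta> + \<omega> + \<alpha> = \<omega> + (\<alpha> + \<beta>)" by (simp add: add.assoc)
  qed
  show ?thesis unfolding Gamma_check_def
  proof (intro set_eqI iffI; elim CollectE bexE conjE; intro CollectI)
    fix \<omega> \<alpha> \<beta> assume h: "\<alpha> \<in> a" "\<beta> \<in> b" "\<beta> + \<omega> + \<alpha> \<in> y" "\<omega> + \<alpha> \<in> z" "\<beta> + \<omega> \<in> x"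
    show "\<exists>\<alpha>\<in>a. \<exists>\<beta>\<in>b. \<omega> + (\<alpha> + \<beta>) \<in> y \<and> \<omega> + \<alpha> \<in> z \<and> \<omega> + \<beta> \<in> x"
      using h e[OF h(1,2), of \<omega>] by auto
  next
    fix \<omega> \<alpha> \<beta> assume h: "\<alpha> \<in> a" "\<beta> \<in> b" "\<omega> + (\<alpha> + \<beta>) \<in> y" "\<omega> + \<alpha> \<in> z" "\<omega> + \<beta> \<in> x"
    have "\<beta> + \<omega> + \<alpha> \<in> y" using h(3) by (simp only: e(2)[OF h(1,2)])
    moreover have "\<beta> + \<omega> \<in> x" using h(5) by (simp only: e(1)[OF h(1,2)])
    ultimately show "\<exists>\<alpha>\<in>a. \<exists>\<beta>\<in>b. \<beta> + \<omega> + \<alpha> \<in> y \<and> \<omega> + \<alpha> \<in> z \<and> \<beta> + \<omega> \<in> x"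
      using h by blast
  qed
qed

lemma Sigma_alt:
  assumes "central b"
  shows "Sigma_law b x y z = {\<omega>. \<exists>\<beta>\<in>b. \<exists>\<beta>'\<in>b. \<omega> + \<beta> \<in> x \<and> \<omega> + (\<beta>' + \<beta>) \<in> y \<and> \<omega> + \<beta>' \<in> z}"
  unfolding Sigma_law_def by (simp add: add.assoc)

lemma Sigma_check_alt:
  assumes "central b"
  shows "Sigma_check b x y z = {\<omega>. \<exists>\<beta>\<in>b. \<exists>\<beta>'\<in>b. \<omega> + \<beta> \<in> x \<and> \<omega> + (\<beta>' + \<beta>) \<in> y \<and> \<omega> + \<beta>' \<in> z}"
proof -
  have e: "\<beta> + \<omega> = \<omega> + \<beta>" "\<beta>' + \<omega> = \<omega> + \<beta>'" "\<beta> + \<beta>' + \<omega> = \<omega> + (\<beta>' + \<beta>)" if "\<beta> \<in> b" "\<beta>' \<in> b" for \<beta> \<beta>' \<omega>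
  proof -
    show "\<beta> + \<omega> = \<omega> + \<beta>" using cen_mem[OF assms that(1)] .
    show "\<beta>' + \<omega> = \<omega> + \<beta>'" using cen_mem[OF assms that(2)] .
    have 1: "\<beta> + \<beta>' = \<beta>' + \<beta>" using cen_mem[OF assms that(1)] .
    have "\<beta> + \<beta>' + \<omega> = \<beta> + (\<omega> + \<beta>')" using cen_mem[OF assms that(2)] by (simp add: add.assoc)
    also have "\<dots> = (\<beta> + \<omega>) + \<beta>'" by (simp add: add.assoc)
    also have "\<dots> = \<omega> + (\<beta> + \<beta>')" using cen_mem[OF assms that(1)] by (simp add: add.assoc)
    finally show "\<beta> + \<beta>' + \<omega> = \<omega> + (\<beta>' + \<beta>)" using 1 by simp
  qed
  show ?thesis unfolding Sigma_check_def
  proof (intro set_eqI iffI; elim CollectE bexE conjE; intro CollectI)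
    fix \<omega> \<beta> \<beta>' assume h: "\<beta> \<in> b" "\<beta>' \<in> b" "\<beta> + \<omega> \<in> x" "\<beta> + \<beta>' + \<omega> \<in> y" "\<beta>' + \<omega> \<in> z"
    show "\<exists>\<beta>\<in>b. \<exists>\<beta>'\<in>b. \<omega> + \<beta> \<in> x \<and> \<omega> + (\<beta>' + \<beta>) \<in> y \<and> \<omega> + \<beta>' \<in> z"
      using h e[OF h(1,2), of \<omega>] by auto
  next
    fix \<omega> \<beta> \<beta>' assume h: "\<beta> \<in> b" "\<beta>' \<in> b" "\<omega> + \<beta> \<in> x" "\<omega> + (\<beta>' + \<beta>) \<in> y" "\<omega> + \<beta>' \<in> z"
    have "\<beta> + \<beta>' + \<omega> \<in> y" using h(4) by (simp only: e(3)[OF h(1,2)])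
    moreover have "\<beta> + \<omega> \<in> x" using h(3) by (simp only: e(1)[OF h(1,2)])
    moreover have "\<beta>' + \<omega> \<in> z" using h(5) by (simp only: e(2)[OF h(1,2)])
    ultimately show "\<exists>\<beta>\<in>b. \<exists>\<beta>'\<in>b. \<beta> + \<omega> \<in> x \<and> \<beta> + \<beta>' + \<omega> \<in> y \<and> \<beta>' + \<omega> \<in> z"
      using h by blast
  qed
qed

lemma Sigma_sym:
  assumes "central b"
  shows "Sigma_check b x y z = Sigma_check b z y x"
  unfolding Sigma_check_alt[OF assms]
proof (intro set_eqI iffI; elim CollectE bexE conjE; intro CollectI)
  fix \<omega> \<beta> \<beta>' assume h: "\<beta> \<in> b" "\<beta>' \<in> b" "\<omega> + \<beta> \<in> x" "\<omega> + (\<beta>' + \<beta>) \<in> y" "\<omega> + \<beta>' \<in> z"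
  have "\<beta>' + \<beta> = \<beta> + \<beta>'" using cen_mem[OF assms h(2)] .
  then show "\<exists>\<beta>\<in>b. \<exists>\<beta>'\<in>b. \<omega> + \<beta> \<in> z \<and> \<omega> + (\<beta>' + \<beta>) \<in> y \<and> \<omega> + \<beta>' \<in> x"
    using h by auto
next
  fix \<omega> \<beta> \<beta>' assume h: "\<beta> \<in> b" "\<beta>' \<in> b" "\<omega> + \<beta> \<in> z" "\<omega> + (\<beta>' + \<beta>) \<in> y" "\<omega> + \<beta>' \<in> x"
  have "\<beta>' + \<beta> = \<beta> + \<beta>'" using cen_mem[OF assms h(2)] .
  then show "\<exists>\<beta>\<in>b. \<exists>\<beta>'\<in>b. \<omega> + \<beta> \<in> x \<and> \<omega> + (\<beta>' + \<beta>) \<in> y \<and> \<omega> + \<beta>' \<in> z"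
    using h by auto
qed

lemma Gamma_grp:
  assumes "is_subgroup a" "central a" "is_subgroup b" "central b"
    and "is_subgroup x" "is_subgroup y" "is_subgroup z"
  shows "is_subgroup {\<omega>. \<exists>\<alpha>\<in>a. \<exists>\<beta>\<in>b. \<omega> + (\<alpha> + \<beta>) \<in> y \<and> \<omega> + \<alpha> \<in> z \<and> \<omega> + \<beta> \<in> x}"
  unfolding is_subgroup_def
proof (intro conjI ballI)
  show "0 \<in> {\<omega>. \<exists>\<alpha>\<in>a. \<exists>\<beta>\<in>b. \<omega> + (\<alpha> + \<beta>) \<in> y \<and> \<omega> + \<alpha> \<in> z \<and> \<omega> + \<beta> \<in> x}"
    using subD(1)[OF assms(1)] subD(1)[OF assms(3)] subD(1)[OF assms(5)] subD(1)[OF assms(6)] subD(1)[OF assms(7)]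
    by force
next
  fix u v assume "u \<in> {\<omega>. \<exists>\<alpha>\<in>a. \<exists>\<beta>\<in>b. \<omega> + (\<alpha> + \<beta>) \<in> y \<and> \<omega> + \<alpha> \<in> z \<and> \<omega> + \<beta> \<in> x}"
    "v \<in> {\<omega>. \<exists>\<alpha>\<in>a. \<exists>\<beta>\<in>b. \<omega> + (\<alpha> + \<beta>) \<in> y \<and> \<omega> + \<alpha> \<in> z \<and> \<omega> + \<beta> \<in> x}"
  then obtain a1 b1 a2 b2 where h: "a1 \<in> a" "b1 \<in> b" "a2 \<in> a" "b2 \<in> b"
    "u + (a1 + b1) \<in> y" "u + a1 \<in> z" "u + b1 \<in> x"
    "v + (a2 + b2) \<in> y" "v + a2 \<in> z" "v + b2 \<in> x" by blast
  have c: "cen a1" "cen a2" "cen b1" "cen b2" using h assms cenI by blast+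
  have "(u + a1) + (v + a2) = (u + v) + (a1 + a2)" by (rule cen_swap) (use c in auto)
  moreover have "(u + b1) + (v + b2) = (u + v) + (b1 + b2)" by (rule cen_swap) (use c in auto)
  moreover have "(u + (a1 + b1)) + (v + (a2 + b2)) = (u + v) + ((a1 + b1) + (a2 + b2))"
    by (rule cen_swap) (use c cen_add in auto)
  moreover have e4: "(a1 + b1) + (a2 + b2) = (a1 + a2) + (b1 + b2)"
  proof -
    have "(a1 + b1) + (a2 + b2) = a1 + ((b1 + a2) + b2)" by (simp add: add.assoc)
    also have "b1 + a2 = a2 + b1" using c by (simp add: cenD)
    finally show ?thesis by (simp add: add.assoc)
  qed
  note eqs = calculation
  have m0: "(u + v) + (a1 + a2) \<in> z" "(u + v) + (b1 + b2) \<in> x"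
    using eqs h subD(2)[OF assms(1)] subD(2)[OF assms(3)] subD(2)[OF assms(5)] subD(2)[OF assms(6)] subD(2)[OF assms(7)] by metis+
  have "(u + v) + ((a1 + a2) + (b1 + b2)) \<in> y"
    using subD(2)[OF assms(6) h(5) h(8)] eqs(3) e4 by simp
  moreover have "a1 + a2 \<in> a" "b1 + b2 \<in> b" using subD(2)[OF assms(1)] subD(2)[OF assms(3)] h by auto
  ultimately have m1: "(u + v) + (a1 + a2) \<in> z" "(u + v) + (b1 + b2) \<in> x" "(u + v) + ((a1 + a2) + (b1 + b2)) \<in> y"
    "a1 + a2 \<in> a" "b1 + b2 \<in> b" using m0 by auto
  show "u + v \<in> {\<omega>. \<exists>\<alpha>\<in>a. \<exists>\<beta>\<in>b. \<omega> + (\<alpha> + \<beta>) \<in> y \<and> \<omega> + \<alpha> \<in> z \<and> \<omega> + \<beta> \<in> x}"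
    using m1 by blast
next
  fix u assume "u \<in> {\<omega>. \<exists>\<alpha>\<in>a. \<exists>\<beta>\<in>b. \<omega> + (\<alpha> + \<beta>) \<in> y \<and> \<omega> + \<alpha> \<in> z \<and> \<omega> + \<beta> \<in> x}"
  then obtain a1 b1 where h: "a1 \<in> a" "b1 \<in> b"
    "u + (a1 + b1) \<in> y" "u + a1 \<in> z" "u + b1 \<in> x" by blast
  have c: "cen a1" "cen b1" using h assms cenI by blast+
  have "- (u + a1) = - u + - a1" by (rule cen_neg) (use c in auto)
  moreover have "- (u + b1) = - u + - b1" by (rule cen_neg) (use c in auto)
  moreover have "- (u + (a1 + b1)) = - u + - (a1 + b1)" by (rule cen_neg) (use c cen_add in auto)
  moreover have e4: "- (a1 + b1) = - a1 + - b1" unfolding minus_add by (rule cen_minus[OF c(2)])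
  note eqs = calculation
  have m0: "(- u) + (- a1) \<in> z" "(- u) + (- b1) \<in> x"
    using eqs h subD(3)[OF assms(1)] subD(3)[OF assms(3)] subD(3)[OF assms(5)] subD(3)[OF assms(6)] subD(3)[OF assms(7)] by metis+
  have "(- u) + ((- a1) + (- b1)) \<in> y"
    using subD(3)[OF assms(6) h(3)] eqs(3) e4 by simp
  moreover have "- a1 \<in> a" "- b1 \<in> b" using subD(3)[OF assms(1)] subD(3)[OF assms(3)] h by auto
  ultimately have m1: "(- u) + (- a1) \<in> z" "(- u) + (- b1) \<in> x" "(- u) + ((- a1) + (- b1)) \<in> y"
    "- a1 \<in> a" "- b1 \<in> b" using m0 by auto
  show "- u \<in> {\<omega>. \<exists>\<alpha>\<in>a. \<exists>\<beta>\<in>b. \<omega> + (\<alpha> + \<beta>) \<in> y \<and> \<omega> + \<alpha> \<in> z \<and> \<omega> + \<beta> \<in> x}"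
    using m1 by blast
qed

lemma Sigma_grp:
  assumes "is_subgroup b" "central b"
    and "is_subgroup x" "is_subgroup y" "is_subgroup z"
  shows "is_subgroup {\<omega>. \<exists>\<beta>\<in>b. \<exists>\<beta>'\<in>b. \<omega> + \<beta> \<in> x \<and> \<omega> + (\<beta>' + \<beta>) \<in> y \<and> \<omega> + \<beta>' \<in> z}"
  unfolding is_subgroup_def
proof (intro conjI ballI)
  show "0 \<in> {\<omega>. \<exists>\<beta>\<in>b. \<exists>\<beta>'\<in>b. \<omega> + \<beta> \<in> x \<and> \<omega> + (\<beta>' + \<beta>) \<in> y \<and> \<omega> + \<beta>' \<in> z}"
    using subD(1)[OF assms(1)] subD(1)[OF assms(3)] subD(1)[OF assms(4)] subD(1)[OF assms(5)]
    by force
next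
  fix u v assume "u \<in> {\<omega>. \<exists>\<beta>\<in>b. \<exists>\<beta>'\<in>b. \<omega> + \<beta> \<in> x \<and> \<omega> + (\<beta>' + \<beta>) \<in> y \<and> \<omega> + \<beta>' \<in> z}"
    "v \<in> {\<omega>. \<exists>\<beta>\<in>b. \<exists>\<beta>'\<in>b. \<omega> + \<beta> \<in> x \<and> \<omega> + (\<beta>' + \<beta>) \<in> y \<and> \<omega> + \<beta>' \<in> z}"
  then obtain a1 b1 a2 b2 where h: "b1 \<in> b" "a1 \<in> b" "b2 \<in> b" "a2 \<in> b"
    "u + (a1 + b1) \<in> y" "u + a1 \<in> z" "u + b1 \<in> x"
    "v + (a2 + b2) \<in> y" "v + a2 \<in> z" "v + b2 \<in> x" by blast
  have c: "cen a1" "cen a2" "cen b1" "cen b2" using h assms cenI by blast+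
  have "(u + a1) + (v + a2) = (u + v) + (a1 + a2)" by (rule cen_swap) (use c in auto)
  moreover have "(u + b1) + (v + b2) = (u + v) + (b1 + b2)" by (rule cen_swap) (use c in auto)
  moreover have "(u + (a1 + b1)) + (v + (a2 + b2)) = (u + v) + ((a1 + b1) + (a2 + b2))"
    by (rule cen_swap) (use c cen_add in auto)
  moreover have e4: "(a1 + b1) + (a2 + b2) = (a1 + a2) + (b1 + b2)"
  proof -
    have "(a1 + b1) + (a2 + b2) = a1 + ((b1 + a2) + b2)" by (simp add: add.assoc)
    also have "b1 + a2 = a2 + b1" using c by (simp add: cenD)
    finally show ?thesis by (simp add: add.assoc)
  qed
  note eqs = calculation
  have m0: "(u + v) + (a1 + a2) \<in> z" "(u + v) + (b1 + b2) \<in> x"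
    using eqs h subD(2)[OF assms(1)] subD(2)[OF assms(3)] subD(2)[OF assms(4)] subD(2)[OF assms(5)] by metis+
  have "(u + v) + ((a1 + a2) + (b1 + b2)) \<in> y"
    using subD(2)[OF assms(4) h(5) h(8)] eqs(3) e4 by simp
  moreover have "a1 + a2 \<in> b" "b1 + b2 \<in> b" using subD(2)[OF assms(1)] subD(2)[OF assms(3)] h by auto
  ultimately have m1: "(u + v) + (a1 + a2) \<in> z" "(u + v) + (b1 + b2) \<in> x" "(u + v) + ((a1 + a2) + (b1 + b2)) \<in> y"
    "a1 + a2 \<in> b" "b1 + b2 \<in> b" using m0 by auto
  show "u + v \<in> {\<omega>. \<exists>\<beta>\<in>b. \<exists>\<beta>'\<in>b. \<omega> + \<beta> \<in> x \<and> \<omega> + (\<beta>' + \<beta>) \<in> y \<and> \<omega> + \<beta>' \<in> z}"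
    using m1 by blast
next
  fix u assume "u \<in> {\<omega>. \<exists>\<beta>\<in>b. \<exists>\<beta>'\<in>b. \<omega> + \<beta> \<in> x \<and> \<omega> + (\<beta>' + \<beta>) \<in> y \<and> \<omega> + \<beta>' \<in> z}"
  then obtain a1 b1 where h: "b1 \<in> b" "a1 \<in> b"
    "u + (a1 + b1) \<in> y" "u + a1 \<in> z" "u + b1 \<in> x" by blast
  have c: "cen a1" "cen b1" using h assms cenI by blast+
  have "- (u + a1) = - u + - a1" by (rule cen_neg) (use c in auto)
  moreover have "- (u + b1) = - u + - b1" by (rule cen_neg) (use c in auto)
  moreover have "- (u + (a1 + b1)) = - u + - (a1 + b1)" by (rule cen_neg) (use c cen_add in auto)
  moreover have e4: "- (a1 + b1) = - a1 + - b1" unfolding minus_add by (rule cen_minus[OF c(2)])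
  note eqs = calculation
  have m0: "(- u) + (- a1) \<in> z" "(- u) + (- b1) \<in> x"
    using eqs h subD(3)[OF assms(1)] subD(3)[OF assms(3)] subD(3)[OF assms(4)] subD(3)[OF assms(5)] by metis+
  have "(- u) + ((- a1) + (- b1)) \<in> y"
    using subD(3)[OF assms(4) h(3)] eqs(3) e4 by simp
  moreover have "- a1 \<in> b" "- b1 \<in> b" using subD(3)[OF assms(1)] subD(3)[OF assms(3)] h by auto
  ultimately have m1: "(- u) + (- a1) \<in> z" "(- u) + (- b1) \<in> x" "(- u) + ((- a1) + (- b1)) \<in> y"
    "- a1 \<in> b" "- b1 \<in> b" using m0 by auto
  show "- u \<in> {\<omega>. \<exists>\<beta>\<in>b. \<exists>\<beta>'\<in>b. \<omega> + \<beta> \<in> x \<and> \<omega> + (\<beta>' + \<beta>) \<in> y \<and> \<omega> + \<beta>' \<in> z}"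
    using m1 by blast
qed

theorem theorem3p3:
  fixes a b :: "'a::group_add set"
  assumes "is_subgroup a" and "central a" and "is_subgroup b" and "central b"
  shows "(\<forall>x y z. Gamma x a y b z = Gamma_check x a y b z
                 \<and> Gamma_check x a y b z = Gamma z b y a x)
       \<and> (\<forall>x y z. Sigma_law b x y z = Sigma_check b x y z
                 \<and> Sigma_check b x y z = Sigma_check b z y x
                 \<and> Sigma_check b z y x = Sigma_law b z y x)
       \<and> (\<forall>x\<in>Gras. \<forall>y\<in>Gras. \<forall>z\<in>Gras.
              Gamma x a y b z \<in> Gras \<and> Gamma_check x a y b z \<in> Gras
            \<and> Sigma_law b x y z \<in> Gras \<and> Sigma_check b x y z \<in> Gras)"
proof (intro conjI allI ballI)
  fix x y z :: "'a set"
  show "Gamma x a y b z = Gamma_check x a y b z"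
    using Gamma_alt[OF assms(2,4)] Gamma_check_alt[OF assms(2,4)] by simp
  have ab: "\<And>\<alpha> \<beta>. \<alpha> \<in> a \<Longrightarrow> \<beta> \<in> b \<Longrightarrow> \<alpha> + \<beta> = \<beta> + \<alpha>"
    using assms cen_mem by blast
  show "Gamma_check x a y b z = Gamma z b y a x"
    unfolding Gamma_check_alt[OF assms(2,4)] Gamma_alt[OF assms(4,2)]
  proof (intro set_eqI iffI; elim CollectE bexE conjE; intro CollectI)
    fix \<omega> \<alpha> \<beta> assume h: "\<alpha> \<in> a" "\<beta> \<in> b" "\<omega> + (\<alpha> + \<beta>) \<in> y" "\<omega> + \<alpha> \<in> z" "\<omega> + \<beta> \<in> x"
    moreover have "\<alpha> + \<beta> = \<beta> + \<alpha>" using ab h(1,2) by blast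
    ultimately have "\<omega> + (\<beta> + \<alpha>) \<in> y" by simp
    then show "\<exists>\<alpha>\<in>b. \<exists>\<beta>\<in>a. \<omega> + (\<alpha> + \<beta>) \<in> y \<and> \<omega> + \<alpha> \<in> x \<and> \<omega> + \<beta> \<in> z"
      using h by blast
  next
    fix \<omega> \<alpha> \<beta> assume h: "\<alpha> \<in> b" "\<beta> \<in> a" "\<omega> + (\<alpha> + \<beta>) \<in> y" "\<omega> + \<alpha> \<in> x" "\<omega> + \<beta> \<in> z"
    moreover have "\<beta> + \<alpha> = \<alpha> + \<beta>" using ab h(1,2) by blast
    ultimately have "\<omega> + (\<beta> + \<alpha>) \<in> y" by simp
    then show "\<exists>\<alpha>\<in>a. \<exists>\<beta>\<in>b. \<omega> + (\<alpha> + \<beta>) \<in> y \<and> \<omega> + \<alpha> \<in> z \<and> \<omega> + \<beta> \<in> x"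
      using h by blast
  qed
  show "Sigma_law b x y z = Sigma_check b x y z"
    using Sigma_alt[OF assms(4)] Sigma_check_alt[OF assms(4)] by simp
  show "Sigma_check b x y z = Sigma_check b z y x" by (rule Sigma_sym[OF assms(4)])
  show "Sigma_check b z y x = Sigma_law b z y x"
    using Sigma_alt[OF assms(4)] Sigma_check_alt[OF assms(4)] by simp
next
  fix x y z :: "'a set" assume g: "x \<in> Gras" "y \<in> Gras" "z \<in> Gras"
  hence s: "is_subgroup x" "is_subgroup y" "is_subgroup z" by (auto simp: Gras_def)
  show "Gamma x a y b z \<in> Gras"
    unfolding Gamma_alt[OF assms(2,4)] Gras_def using Gamma_grp[OF assms s] by simp
  show "Gamma_check x a y b z \<in> Gras"
    unfolding Gamma_check_alt[OF assms(2,4)] Gras_def using Gamma_grp[OF assms s] by simp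
  show "Sigma_law b x y z \<in> Gras"
    unfolding Sigma_alt[OF assms(4)] Gras_def using Sigma_grp[OF assms(3,4) s] by simp
  show "Sigma_check b x y z \<in> Gras"
    unfolding Sigma_check_alt[OF assms(4)] Gras_def using Sigma_grp[OF assms(3,4) s] by simp
qed

end
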